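(* Let $\mathcal{L}$ be the generator of a trace preserving quantum dynamical semigroup on $\mathfrak{T}(\mathcal{H})$ which is matrix normal with respect to an orthonormal basis $\{e_k\}$; put $\mathcal{D}_e=\mathrm{span}\{e_k\}$, $\mathcal{D}_e^2=\mathrm{span}\{|e_k\rangle\langle e_\ell|\}$. Fix $\chi\in\mathcal{D}_e$ with $\|\chi\|=1$, and define the operator $M$ on $\mathcal{D}(M)=\{\psi\in\mathcal{H}:|\psi\rangle\langle\chi|\in\mathcal{D}(\mathcal{L})\}$ by $$M\psi=-\mathcal{L}(|\psi\rangle\langle\chi|)\chi+\tfrac12\langle\chi|\mathcal{L}(|\chi\rangle\langle\chi|)|\chi\rangle\,\psi .$$ Then $\mathcal{D}_e\subset\mathcal{D}(M)$, and the map $\mathcal{L}_+$ defined on $\mathcal{D}_e^2$ by $\mathcal{L}_+(\rho)=\mathcal{L}(\rho)+M\rho+\rho M^\dagger$, i.e. by linear extension of $\mathcal{L}_+(|\phi\rangle\langle\psi|)=\mathcal{L}(|\phi\rangle\langle\psi|)+|M\phi\rangle\langle\psi|+|\phi\rangle\langle M\psi|$ for $\phi,\psi\in\mathcal{D}_e$, is a completely positive map from $\mathcal{D}_e^2$ into $\mathfrak{T}(\mathcal{H})$: for all $N$, all $\phi_1,\dots,\phi_N\in\mathcal{D}_e$ and all $\psi_1,\dots,\psi_N\in\mathcal{H}$, $\sum_{k,\ell}\langle\psi_k|\mathcal{L}_+(|\phi_k\rangle\langle\phi_\ell|)|\psi_\ell\rangle\ge0$.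
   Context: $\mathcal{H}$ is a separable Hilbert space, $\mathfrak{T}(\mathcal{H})$ the trace class operators with trace norm. A trace preserving quantum dynamical semigroup is a strongly continuous semigroup $(\mathcal{T}^t)_{t\ge0}$ of trace preserving completely positive maps on $\mathfrak{T}(\mathcal{H})$, with generator $\mathcal{L}(\rho)=\lim_{t\to0}\frac1t(\mathcal{T}^t(\rho)-\rho)$ (trace norm limit, domain where it exists). Matrix normal with respect to $\{e_k\}$ means $\mathcal{D}_e^2$ is a core for $\mathcal{L}$. *)

theory Defs
  imports "HOL-Analysis.Analysis"
begin

text \<open>Model: the separable Hilbert space H is l2 over a countable index type 'i,
  the orthonormal basis {e_k} is the standard basis.  Operators are represented by
  their matrices A i j = <e_i, A e_j>.\<close>

type_synonym 'i vec = "'i \<Rightarrow> complex"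
type_synonym 'i mat = "'i \<Rightarrow> 'i \<Rightarrow> complex"

definition ell2 :: "'i vec set" where
  "ell2 = {x. (\<lambda>i. (cmod (x i))^2) summable_on UNIV}"

definition vnorm :: "'i vec \<Rightarrow> real" where
  "vnorm x = sqrt (infsum (\<lambda>i. (cmod (x i))^2) UNIV)"

definition cinner :: "'i vec \<Rightarrow> 'i vec \<Rightarrow> complex" where
  "cinner x y = infsum (\<lambda>i. cnj (x i) * y i) UNIV"

definition basis :: "'i \<Rightarrow> 'i vec" where
  "basis k = (\<lambda>i. if i = k then 1 else 0)"

definition outer :: "'i vec \<Rightarrow> 'i vec \<Rightarrow> 'i mat" where
  "outer \<phi> \<psi> = (\<lambda>i j. \<phi> i * cnj (\<psi> j))"

definition mat_app :: "'i mat \<Rightarrow> 'i vec \<Rightarrow> 'i vec" where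
  "mat_app A x = (\<lambda>i. infsum (\<lambda>j. A i j * x j) UNIV)"

definition madd :: "'i mat \<Rightarrow> 'i mat \<Rightarrow> 'i mat" where
  "madd A B = (\<lambda>i j. A i j + B i j)"

definition msub :: "'i mat \<Rightarrow> 'i mat \<Rightarrow> 'i mat" where
  "msub A B = (\<lambda>i j. A i j - B i j)"

definition mscale :: "complex \<Rightarrow> 'i mat \<Rightarrow> 'i mat" where
  "mscale c A = (\<lambda>i j. c * A i j)"

definition mtrace :: "'i mat \<Rightarrow> complex" where
  "mtrace A = infsum (\<lambda>i. A i i) UNIV"

text \<open>Nuclear representation A = sum_n |u_n><v_n| with sum_n ||u_n|| ||v_n|| finite.
  Trace class = nuclear operators; trace norm = nuclear norm.\<close>
definition nuclear_rep :: "'i mat \<Rightarrow> (nat \<Rightarrow> 'i vec) \<Rightarrow> (nat \<Rightarrow> 'i vec) \<Rightarrow> bool" where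
  "nuclear_rep A u v \<longleftrightarrow>
     (\<forall>n. u n \<in> ell2 \<and> v n \<in> ell2) \<and>
     summable (\<lambda>n. vnorm (u n) * vnorm (v n)) \<and>
     (\<forall>i j. ((\<lambda>n. u n i * cnj (v n j)) has_sum A i j) UNIV)"

definition trace_class :: "'i mat \<Rightarrow> bool" where
  "trace_class A \<longleftrightarrow> (\<exists>u v. nuclear_rep A u v)"

definition tnorm :: "'i mat \<Rightarrow> real" where
  "tnorm A = Inf {suminf (\<lambda>n. vnorm (u n) * vnorm (v n)) | u v. nuclear_rep A u v}"

definition tc_linear :: "('i mat \<Rightarrow> 'i mat) \<Rightarrow> bool" where
  "tc_linear \<Phi> \<longleftrightarrow> (\<forall>A B a b. trace_class A \<and> trace_class B \<longrightarrow>
      \<Phi> (madd (mscale a A) (mscale b B)) = madd (mscale a (\<Phi> A)) (mscale b (\<Phi> B)))"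

definition cnonneg :: "complex \<Rightarrow> bool" where
  "cnonneg z \<longleftrightarrow> Im z = 0 \<and> Re z \<ge> 0"

definition cp_on :: "'i vec set \<Rightarrow> ('i mat \<Rightarrow> 'i mat) \<Rightarrow> bool" where
  "cp_on D \<Phi> \<longleftrightarrow> (\<forall>(N::nat) \<phi> \<psi>. (\<forall>k<N. \<phi> k \<in> D \<and> \<psi> k \<in> ell2) \<longrightarrow>
      cnonneg (\<Sum>k<N. \<Sum>l<N. cinner (\<psi> k) (mat_app (\<Phi> (outer (\<phi> k) (\<phi> l))) (\<psi> l))))"

definition qds :: "(real \<Rightarrow> 'i mat \<Rightarrow> 'i mat) \<Rightarrow> bool" where
  "qds T \<longleftrightarrow>
     (\<forall>t\<ge>0. \<forall>A. trace_class A \<longrightarrow> trace_class (T t A)) \<and>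
     (\<forall>t\<ge>0. tc_linear (T t)) \<and>
     (\<forall>t\<ge>0. \<exists>C. \<forall>A. trace_class A \<longrightarrow> tnorm (T t A) \<le> C * tnorm A) \<and>
     (\<forall>A. trace_class A \<longrightarrow> T 0 A = A) \<and>
     (\<forall>s t A. s \<ge> 0 \<and> t \<ge> 0 \<and> trace_class A \<longrightarrow> T (s + t) A = T s (T t A)) \<and>
     (\<forall>A. trace_class A \<longrightarrow> ((\<lambda>t. tnorm (msub (T t A) A)) \<longlongrightarrow> 0) (at_right 0)) \<and>
     (\<forall>t\<ge>0. \<forall>A. trace_class A \<longrightarrow> mtrace (T t A) = mtrace A) \<and>
     (\<forall>t\<ge>0. cp_on ell2 (T t))"

definition has_gen :: "(real \<Rightarrow> 'i mat \<Rightarrow> 'i mat) \<Rightarrow> 'i mat \<Rightarrow> 'i mat \<Rightarrow> bool" where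
  "has_gen T A B \<longleftrightarrow> trace_class A \<and> trace_class B \<and>
     ((\<lambda>t. tnorm (msub (mscale (complex_of_real (1 / t)) (msub (T t A) A)) B)) \<longlongrightarrow> 0) (at_right 0)"

definition gen_dom :: "(real \<Rightarrow> 'i mat \<Rightarrow> 'i mat) \<Rightarrow> 'i mat set" where
  "gen_dom T = {A. \<exists>B. has_gen T A B}"

definition gen :: "(real \<Rightarrow> 'i mat \<Rightarrow> 'i mat) \<Rightarrow> 'i mat \<Rightarrow> 'i mat" where
  "gen T A = (THE B. has_gen T A B)"

text \<open>D_e = span{e_k} (finitely supported vectors), D_e^2 = span{|e_k><e_l|}.\<close>
definition De :: "'i vec set" where
  "De = {x. finite {i. x i \<noteq> 0}}"

definition De2 :: "'i mat set" where
  "De2 = {A. finite {(i, j). A i j \<noteq> 0}}"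

text \<open>D_e^2 is a core for the generator.\<close>
definition matrix_normal :: "(real \<Rightarrow> 'i mat \<Rightarrow> 'i mat) \<Rightarrow> bool" where
  "matrix_normal T \<longleftrightarrow> De2 \<subseteq> gen_dom T \<and>
     (\<forall>A\<in>gen_dom T. \<exists>X. (\<forall>n. X n \<in> De2) \<and>
        (\<lambda>n. tnorm (msub (X n) A)) \<longlonglongrightarrow> 0 \<and>
        (\<lambda>n. tnorm (msub (gen T (X n)) (gen T A))) \<longlonglongrightarrow> 0)"

definition Mdom :: "(real \<Rightarrow> 'i mat \<Rightarrow> 'i mat) \<Rightarrow> 'i vec \<Rightarrow> 'i vec set" where
  "Mdom T chi = {\<psi>. \<psi> \<in> ell2 \<and> outer \<psi> chi \<in> gen_dom T}"

definition Mop :: "(real \<Rightarrow> 'i mat \<Rightarrow> 'i mat) \<Rightarrow> 'i vec \<Rightarrow> 'i vec \<Rightarrow> 'i vec" where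
  "Mop T chi \<psi> = (\<lambda>i. - mat_app (gen T (outer \<psi> chi)) chi i
      + (1/2) * cinner chi (mat_app (gen T (outer chi chi)) chi) * \<psi> i)"

text \<open>L_+(rho) = L(rho) + M rho + rho M^dagger for rho in D_e^2 (finite sums).\<close>
definition Lplus :: "(real \<Rightarrow> 'i mat \<Rightarrow> 'i mat) \<Rightarrow> 'i vec \<Rightarrow> 'i mat \<Rightarrow> 'i mat" where
  "Lplus T chi \<rho> = (\<lambda>i j. gen T \<rho> i j
      + infsum (\<lambda>k. Mop T chi (basis k) i * \<rho> k j) UNIV
      + infsum (\<lambda>l. \<rho> i l * cnj (Mop T chi (basis l) j)) UNIV)"

end

theory Submission
  imports Defs
begin


lemma ell2_summable: "x \<in> ell2 \<Longrightarrow> (\<lambda>i. (cmod (x i))^2) summable_on UNIV"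
  by (simp add: ell2_def)

lemma vnorm_nonneg: "vnorm x \<ge> 0"
  by (simp add: vnorm_def infsum_nonneg)

lemma vnorm_sq: "x \<in> ell2 \<Longrightarrow> (vnorm x)^2 = infsum (\<lambda>i. (cmod (x i))^2) UNIV"
  unfolding vnorm_def by (simp add: infsum_nonneg)

lemma ell2_fin_le: assumes "x \<in> ell2" "finite F"
  shows "(\<Sum>i\<in>F. (cmod (x i))^2) \<le> (vnorm x)^2"
  using finite_sum_le_infsum[OF ell2_summable[OF assms(1)] assms(2)] vnorm_sq[OF assms(1)] by simp

lemma cmod_le_vnorm: assumes "x \<in> ell2" shows "cmod (x i) \<le> vnorm x"
proof -
  have "(cmod (x i))^2 \<le> (vnorm x)^2" using ell2_fin_le[OF assms, of "{i}"] by simp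
  thus ?thesis using vnorm_nonneg by (rule power2_le_imp_le)
qed

lemma fin_CS: assumes "x \<in> ell2" "y \<in> ell2" "finite F"
  shows "(\<Sum>i\<in>F. cmod (x i) * cmod (y i)) \<le> vnorm x * vnorm y"
proof -
  have "(\<Sum>i\<in>F. cmod (x i) * cmod (y i))^2 \<le> (\<Sum>i\<in>F. (cmod (x i))^2) * (\<Sum>i\<in>F. (cmod (y i))^2)"
    by (rule Cauchy_Schwarz_ineq_sum)
  also have "\<dots> \<le> (vnorm x)^2 * (vnorm y)^2"
    by (rule mult_mono[OF ell2_fin_le[OF assms(1,3)] ell2_fin_le[OF assms(2,3)]]) (auto intro: sum_nonneg)
  also have "\<dots> = (vnorm x * vnorm y)^2" by (simp add: power_mult_distrib)
  finally show ?thesis by (rule power2_le_imp_le) (simp add: vnorm_nonneg)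
qed

lemma cinner_abs_summable: assumes "x \<in> ell2" "y \<in> ell2"
  shows "(\<lambda>i. norm (cnj (x i) * y i)) summable_on UNIV"
proof (rule nonneg_bdd_above_summable_on)
  show "bdd_above (sum (\<lambda>i. norm (cnj (x i) * y i)) ` {F. F \<subseteq> UNIV \<and> finite F})"
    using fin_CS[OF assms] by (intro bdd_aboveI2[where M="vnorm x * vnorm y"]) (auto simp: norm_mult)
qed simp

lemma cinner_summable: assumes "x \<in> ell2" "y \<in> ell2" shows "(\<lambda>i. cnj (x i) * y i) summable_on UNIV"
  by (rule abs_summable_summable[OF cinner_abs_summable[OF assms]])

lemma cinner_bound: assumes "x \<in> ell2" "y \<in> ell2"
  shows "cmod (cinner x y) \<le> vnorm x * vnorm y"
proof -
  have "cmod (cinner x y) \<le> infsum (\<lambda>i. norm (cnj (x i) * y i)) UNIV"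
    unfolding cinner_def by (rule norm_infsum_bound[OF cinner_abs_summable[OF assms]])
  also have "\<dots> \<le> vnorm x * vnorm y"
    using fin_CS[OF assms] by (intro infsum_le_finite_sums cinner_abs_summable[OF assms]) (auto simp: norm_mult)
  finally show ?thesis .
qed

lemma ell2_scale: assumes "x \<in> ell2" shows "(\<lambda>i. c * x i) \<in> ell2"
proof -
  have "(\<lambda>i. (cmod c)^2 * (cmod (x i))^2) summable_on UNIV"
    using ell2_summable[OF assms] by (rule summable_on_cmult_right)
  thus ?thesis by (simp add: ell2_def norm_mult power_mult_distrib)
qed

lemma vnorm_scale: assumes "x \<in> ell2" shows "vnorm (\<lambda>i. c * x i) = cmod c * vnorm x"
proof -
  have "infsum (\<lambda>i. (cmod (c * x i))^2) UNIV = (cmod c)^2 * infsum (\<lambda>i. (cmod (x i))^2) UNIV"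
    by (simp add: norm_mult power_mult_distrib infsum_cmult_right')
  thus ?thesis unfolding vnorm_def by (simp add: real_sqrt_mult)
qed

lemma ell2_add: assumes "x \<in> ell2" "y \<in> ell2" shows "(\<lambda>i. x i + y i) \<in> ell2"
proof -
  have s: "(\<lambda>i. 2 * (cmod (x i))^2 + 2 * (cmod (y i))^2) summable_on UNIV"
    using ell2_summable[OF assms(1)] ell2_summable[OF assms(2)]
    by (intro summable_on_add summable_on_cmult_right)
  have "(\<lambda>i. (cmod (x i + y i))^2) summable_on UNIV"
  proof (rule summable_on_comparison_test[OF s])
    fix i
    have "cmod (x i + y i) \<le> cmod (x i) + cmod (y i)" by (rule norm_triangle_ineq)
    hence "(cmod (x i + y i))^2 \<le> (cmod (x i) + cmod (y i))^2" by (rule power_mono) simp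
    also have "\<dots> \<le> 2 * (cmod (x i))^2 + 2 * (cmod (y i))^2"
    proof -
      have "0 \<le> (cmod (x i) - cmod (y i))^2" by simp
      thus ?thesis unfolding power2_sum power2_diff by linarith
    qed
    finally show "(cmod (x i + y i))^2 \<le> 2 * (cmod (x i))^2 + 2 * (cmod (y i))^2" .
  qed simp
  thus ?thesis by (simp add: ell2_def)
qed

lemma ell2_fin: assumes "finite {i. x i \<noteq> 0}" shows "x \<in> ell2"
  unfolding ell2_def using assms
  by (simp, subst summable_on_cong_neutral[where T="{i. x i \<noteq> 0}"]) auto

lemma De_ell2: "x \<in> De \<Longrightarrow> x \<in> ell2"
  by (simp add: De_def ell2_fin)



definition bil :: "'i vec \<Rightarrow> 'i mat \<Rightarrow> 'i vec \<Rightarrow> ('i \<times> 'i \<Rightarrow> complex)" where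
  "bil x A y = (\<lambda>(i,j). cnj (x i) * A i j * y j)"

definition form :: "'i vec \<Rightarrow> 'i mat \<Rightarrow> 'i vec \<Rightarrow> complex" where
  "form x A y = cinner x (mat_app A y)"

definition nsum :: "(nat \<Rightarrow> 'i vec) \<Rightarrow> (nat \<Rightarrow> 'i vec) \<Rightarrow> real" where
  "nsum u v = (\<Sum>n. vnorm (u n) * vnorm (v n))"

lemma nuc_entry_summable:
  assumes "nuclear_rep A u v"
  shows "summable (\<lambda>n. cmod (u n i) * cmod (v n j))"
proof (rule summable_comparison_test')
  show "summable (\<lambda>n. vnorm (u n) * vnorm (v n))" using assms by (simp add: nuclear_rep_def)
  fix n :: nat
  have "u n \<in> ell2" "v n \<in> ell2" using assms by (auto simp: nuclear_rep_def)
  thus "norm (cmod (u n i) * cmod (v n j)) \<le> vnorm (u n) * vnorm (v n)"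
    by (simp add: mult_mono cmod_le_vnorm vnorm_nonneg abs_mult)
qed

lemma nuc_entry_bound:
  assumes "nuclear_rep A u v"
  shows "cmod (A i j) \<le> (\<Sum>n. cmod (u n i) * cmod (v n j))"
proof -
  have "(\<lambda>n. u n i * cnj (v n j)) sums A i j"
    using assms by (auto simp: nuclear_rep_def intro: has_sum_imp_sums)
  hence eq: "A i j = (\<Sum>n. u n i * cnj (v n j))" by (simp add: sums_iff)
  have "summable (\<lambda>n. norm (u n i * cnj (v n j)))"
    using nuc_entry_summable[OF assms, of i j] by (simp add: norm_mult)
  from summable_norm[OF this] show ?thesis unfolding eq by (simp add: norm_mult)
qed

lemma K1:
  assumes nr: "nuclear_rep A u v" and x: "x \<in> ell2" and y: "y \<in> ell2" and F: "finite F"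
  shows "(\<Sum>p\<in>F. cmod (bil x A y p)) \<le> vnorm x * vnorm y * nsum u v"
proof -
  have uv: "\<And>n. u n \<in> ell2" "\<And>n. v n \<in> ell2" and S: "summable (\<lambda>n. vnorm (u n) * vnorm (v n))"
    using nr by (auto simp: nuclear_rep_def)
  define F1 where "F1 = fst ` F"
  define F2 where "F2 = snd ` F"
  have f12: "finite F1" "finite F2" using F by (auto simp: F1_def F2_def)
  have sub: "F \<subseteq> F1 \<times> F2" by (force simp: F1_def F2_def)
  define g where "g = (\<lambda>i j n. cmod (u n i) * cmod (v n j))"
  have gs: "\<And>i j. summable (g i j)" unfolding g_def by (rule nuc_entry_summable[OF nr])
  have gb: "\<And>i j. cmod (A i j) \<le> suminf (g i j)" unfolding g_def by (rule nuc_entry_bound[OF nr])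
  have "(\<Sum>p\<in>F. cmod (bil x A y p)) \<le> (\<Sum>p\<in>F1\<times>F2. cmod (bil x A y p))"
    by (rule sum_mono2) (use f12 sub in auto)
  also have "\<dots> = (\<Sum>i\<in>F1. \<Sum>j\<in>F2. cmod (x i) * cmod (y j) * cmod (A i j))"
    by (simp add: sum.cartesian_product bil_def) (rule sum.cong, auto simp: norm_mult)
  also have "\<dots> \<le> (\<Sum>i\<in>F1. \<Sum>j\<in>F2. cmod (x i) * cmod (y j) * suminf (g i j))"
    by (intro sum_mono mult_left_mono gb) auto
  also have "\<dots> = (\<Sum>i\<in>F1. \<Sum>j\<in>F2. (\<Sum>n. cmod (x i) * cmod (y j) * g i j n))"
    by (simp add: suminf_mult gs)
  also have "\<dots> = (\<Sum>n. \<Sum>i\<in>F1. \<Sum>j\<in>F2. cmod (x i) * cmod (y j) * g i j n)"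
    by (simp add: suminf_sum summable_sum summable_mult gs)
  also have "\<dots> \<le> (\<Sum>n. vnorm x * vnorm y * (vnorm (u n) * vnorm (v n)))"
  proof (rule suminf_le)
    fix n
    have "(\<Sum>i\<in>F1. \<Sum>j\<in>F2. cmod (x i) * cmod (y j) * g i j n)
        = (\<Sum>i\<in>F1. cmod (x i) * cmod (u n i)) * (\<Sum>j\<in>F2. cmod (y j) * cmod (v n j))"
      by (simp add: g_def sum_product mult_ac)
    also have "\<dots> \<le> (vnorm x * vnorm (u n)) * (vnorm y * vnorm (v n))"
      by (intro mult_mono fin_CS x y uv f12) (auto intro: sum_nonneg mult_nonneg_nonneg vnorm_nonneg)
    finally show "(\<Sum>i\<in>F1. \<Sum>j\<in>F2. cmod (x i) * cmod (y j) * g i j n) \<le> vnorm x * vnorm y * (vnorm (u n) * vnorm (v n))"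
      by (simp add: mult_ac)
  qed (auto intro!: summable_sum summable_mult gs S)
  also have "\<dots> = vnorm x * vnorm y * nsum u v"
    by (simp add: nsum_def suminf_mult S)
  finally show ?thesis .
qed

lemma K2:
  assumes nr: "nuclear_rep A u v" and x: "x \<in> ell2" and y: "y \<in> ell2"
  shows "(\<lambda>p. norm (bil x A y p)) summable_on UNIV"
    and "bil x A y summable_on UNIV"
    and "cmod (infsum (bil x A y) UNIV) \<le> vnorm x * vnorm y * nsum u v"
proof -
  show a: "(\<lambda>p. norm (bil x A y p)) summable_on UNIV"
    by (rule nonneg_bdd_above_summable_on)
       (auto intro!: bdd_aboveI2[where M="vnorm x * vnorm y * nsum u v"] K1[OF nr x y])
  show "bil x A y summable_on UNIV" by (rule abs_summable_summable[OF a])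
  have "cmod (infsum (bil x A y) UNIV) \<le> infsum (\<lambda>p. norm (bil x A y p)) UNIV"
    by (rule norm_infsum_bound[OF a])
  also have "\<dots> \<le> vnorm x * vnorm y * nsum u v"
    by (rule infsum_le_finite_sums[OF a]) (auto intro: K1[OF nr x y])
  finally show "cmod (infsum (bil x A y) UNIV) \<le> vnorm x * vnorm y * nsum u v" .
qed

lemma K3:
  assumes "bil x A y summable_on UNIV"
  shows "form x A y = infsum (bil x A y) UNIV"
proof -
  have s: "(\<lambda>(i,j). cnj (x i) * A i j * y j) summable_on Sigma UNIV (\<lambda>_. UNIV)"
    using assms by (simp add: bil_def)
  have "form x A y = infsum (\<lambda>i. infsum (\<lambda>j. cnj (x i) * A i j * y j) UNIV) UNIV"
    unfolding form_def cinner_def mat_app_def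
    by (simp add: infsum_cmult_right'[symmetric] mult.assoc)
  also have "\<dots> = infsum (\<lambda>(i,j). cnj (x i) * A i j * y j) (Sigma UNIV (\<lambda>_. UNIV))"
    by (rule infsum_Sigma'_banach[OF s])
  finally show ?thesis by (simp add: bil_def)
qed



definition il :: "(nat \<Rightarrow> 'a) \<Rightarrow> (nat \<Rightarrow> 'a) \<Rightarrow> nat \<Rightarrow> 'a" where
  "il f g n = (if even n then f (n div 2) else g (n div 2))"

lemma il_has_sum:
  fixes f g :: "nat \<Rightarrow> 'b::topological_comm_monoid_add"
  assumes "(f has_sum a) UNIV" "(g has_sum b) UNIV"
  shows "(il f g has_sum (a + b)) UNIV"
proof -
  have i1: "inj ((*) (2::nat))" by (auto simp: inj_def)
  have i2: "inj (\<lambda>n::nat. 2 * n + 1)" by (auto simp: inj_def)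
  have c1: "il f g \<circ> (*) 2 = f" by (auto simp: il_def)
  have c2: "il f g \<circ> (\<lambda>n. 2 * n + 1) = g" by (auto simp: il_def)
  have h1: "(il f g has_sum a) (range ((*) 2))"
    using has_sum_reindex[OF i1, of "il f g" a] c1 assms(1) by simp
  have h2: "(il f g has_sum b) (range (\<lambda>n. 2 * n + 1))"
    using has_sum_reindex[OF i2, of "il f g" b] c2 assms(2) by simp
  have d: "range ((*) (2::nat)) \<inter> range (\<lambda>n. 2 * n + 1) = {}" by (auto, presburger)
  have u: "range ((*) (2::nat)) \<union> range (\<lambda>n. 2 * n + 1) = UNIV"
  proof -
    { fix m :: nat have "m \<in> range ((*) 2) \<union> range (\<lambda>n. 2 * n + 1)"
      proof (cases "even m")
        case True then show ?thesis by auto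
      next
        case False then obtain k where "m = 2 * k + 1" using oddE by blast
        then show ?thesis by auto
      qed }
    thus ?thesis by auto
  qed
  show ?thesis using has_sum_Un_disjoint[OF h1 h2 d] u by simp
qed

lemma il_summable_real:
  fixes f g :: "nat \<Rightarrow> real"
  assumes "summable f" "summable g" "\<And>n. f n \<ge> 0" "\<And>n. g n \<ge> 0"
  shows "summable (il f g)"
proof -
  have "f summable_on UNIV" "g summable_on UNIV"
    using assms summable_on_UNIV_nonneg_real_iff by blast+
  hence "il f g summable_on UNIV" using il_has_sum by (metis summable_on_def)
  thus ?thesis by (rule summable_on_imp_summable)
qed

lemma nuc_add:
  assumes A: "nuclear_rep A u v" and B: "nuclear_rep B u' v'"
  shows "nuclear_rep (madd A B) (il u u') (il v v')"
proof -
  have e: "(\<lambda>n. vnorm (il u u' n) * vnorm (il v v' n)) = il (\<lambda>n. vnorm (u n) * vnorm (v n)) (\<lambda>n. vnorm (u' n) * vnorm (v' n))"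
    by (auto simp: il_def)
  have e2: "\<And>i j. (\<lambda>n. il u u' n i * cnj (il v v' n j)) = il (\<lambda>n. u n i * cnj (v n j)) (\<lambda>n. u' n i * cnj (v' n j))"
    by (auto simp: il_def)
  show ?thesis using A B unfolding nuclear_rep_def e e2
    by (auto simp: il_def madd_def intro!: il_summable_real il_has_sum mult_nonneg_nonneg vnorm_nonneg)
qed

lemma nuc_scale:
  assumes A: "nuclear_rep A u v"
  shows "nuclear_rep (mscale c A) (\<lambda>n i. c * u n i) v"
proof -
  have uv: "\<And>n. u n \<in> ell2" using A by (auto simp: nuclear_rep_def)
  have e: "(\<lambda>n. vnorm (\<lambda>i. c * u n i) * vnorm (v n)) = (\<lambda>n. cmod c * (vnorm (u n) * vnorm (v n)))"
    using vnorm_scale[OF uv] by (simp add: mult_ac)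
  show ?thesis using A unfolding nuclear_rep_def e
    by (auto simp: mscale_def mult.assoc intro!: summable_mult ell2_scale has_sum_cmult_right)
qed

lemma tc_add: "trace_class A \<Longrightarrow> trace_class B \<Longrightarrow> trace_class (madd A B)"
  unfolding trace_class_def using nuc_add by blast

lemma tc_scale: "trace_class A \<Longrightarrow> trace_class (mscale c A)"
  unfolding trace_class_def using nuc_scale by blast

lemma msub_eq: "msub A B = madd A (mscale (-1) B)"
  by (simp add: msub_def madd_def mscale_def)

lemma tc_sub: "trace_class A \<Longrightarrow> trace_class B \<Longrightarrow> trace_class (msub A B)"
  unfolding msub_eq by (intro tc_add tc_scale)

lemma tc_outer: fixes x y :: "'i vec" assumes "x \<in> ell2" "y \<in> ell2" shows "trace_class (outer x y)"
proof -
  define u where "u = (\<lambda>n::nat. if n = 0 then x else (\<lambda>_. 0))"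
  define v where "v = (\<lambda>n::nat. if n = 0 then y else (\<lambda>_. 0))"
  have z: "(\<lambda>_::'i. 0::complex) \<in> ell2" by (rule ell2_fin) simp
  have 1: "\<forall>n. u n \<in> ell2 \<and> v n \<in> ell2" using assms z by (simp add: u_def v_def)
  have 2: "summable (\<lambda>n. vnorm (u n) * vnorm (v n))"
      by (rule summable_finite[of "{0}"]) (auto simp: u_def v_def vnorm_def)
  have 3: "((\<lambda>n. u n i * cnj (v n j)) has_sum outer x y i j) UNIV" for i j
  proof -
    have h: "((\<lambda>n. u n i * cnj (v n j)) has_sum (x i * cnj (y j))) {0}"
      by (rule has_sum_finiteI) (simp_all add: u_def v_def)
    have "((\<lambda>n. u n i * cnj (v n j)) has_sum (x i * cnj (y j))) UNIV"
      by (rule has_sum_cong_neutral[THEN iffD1, OF _ _ _ h]) (auto simp: u_def v_def)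
    thus ?thesis by (simp add: outer_def)
  qed
  have "nuclear_rep (outer x y) u v" unfolding nuclear_rep_def using 1 2 3 by blast
  thus ?thesis unfolding trace_class_def by blast
qed

lemma form_nuc_bound:
  assumes nr: "nuclear_rep M u v" and x: "x \<in> ell2" and y: "y \<in> ell2"
  shows "cmod (form x M y) \<le> vnorm x * vnorm y * nsum u v"
  using K2[OF nr x y] K3 by metis

lemma form_bound:
  assumes tc: "trace_class M" and x: "x \<in> ell2" and y: "y \<in> ell2"
  shows "cmod (form x M y) \<le> vnorm x * vnorm y * tnorm M"
proof (cases "vnorm x * vnorm y = 0")
  case True
  obtain u v where nr: "nuclear_rep M u v" using tc trace_class_def by blast
  have "cmod (form x M y) \<le> 0" using form_nuc_bound[OF nr x y] True by simp
  thus ?thesis using True by (metis mult_zero_left)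
next
  case False
  hence pos: "vnorm x * vnorm y > 0" using vnorm_nonneg
    by (metis less_eq_real_def mult_nonneg_nonneg)
  have "cmod (form x M y) / (vnorm x * vnorm y) \<le> tnorm M"
    unfolding tnorm_def
  proof (rule cInf_greatest)
    show "{suminf (\<lambda>n. vnorm (u n) * vnorm (v n)) |u v. nuclear_rep M u v} \<noteq> {}"
      using tc trace_class_def by blast
  next
    fix s assume "s \<in> {suminf (\<lambda>n. vnorm (u n) * vnorm (v n)) |u v. nuclear_rep M u v}"
    then obtain u v where nr: "nuclear_rep M u v" and s: "s = nsum u v" by (auto simp: nsum_def)
    show "cmod (form x M y) / (vnorm x * vnorm y) \<le> s"
      using form_nuc_bound[OF nr x y] pos by (simp add: s pos_divide_le_eq mult_ac)
  qed
  thus ?thesis using pos by (simp add: pos_divide_le_eq mult_ac)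
qed

lemma form_add:
  assumes A: "trace_class A" and B: "trace_class B" and x: "x \<in> ell2" and y: "y \<in> ell2"
  shows "form x (madd A B) y = form x A y + form x B y"
proof -
  obtain u v where a: "nuclear_rep A u v" using A trace_class_def by blast
  obtain u' v' where b: "nuclear_rep B u' v'" using B trace_class_def by blast
  have sa: "bil x A y summable_on UNIV" by (rule K2(2)[OF a x y])
  have sb: "bil x B y summable_on UNIV" by (rule K2(2)[OF b x y])
  have e: "bil x (madd A B) y = (\<lambda>p. bil x A y p + bil x B y p)"
    by (auto simp: bil_def madd_def algebra_simps)
  have sab: "bil x (madd A B) y summable_on UNIV" unfolding e by (rule summable_on_add[OF sa sb])
  show ?thesis unfolding K3[OF sab] K3[OF sa] K3[OF sb] e by (rule infsum_add[OF sa sb])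
qed

lemma form_scale: "form x (mscale c A) y = c * form x A y"
  unfolding form_def cinner_def mat_app_def mscale_def
  by (simp add: mult.assoc infsum_cmult_right' mult.left_commute)

lemma form_sub:
  assumes A: "trace_class A" and B: "trace_class B" and x: "x \<in> ell2" and y: "y \<in> ell2"
  shows "form x (msub A B) y = form x A y - form x B y"
  unfolding msub_eq using form_add[OF A tc_scale[OF B] x y] by (simp add: form_scale)

lemma cinner_basis: "cinner (basis i) z = z i"
  unfolding cinner_def basis_def
  by (subst infsum_cong_neutral[where T="{i}" and g="\<lambda>_. z i"]) auto

lemma mat_app_basis: "mat_app A (basis j) = (\<lambda>i. A i j)"
  unfolding mat_app_def basis_def
  by (rule ext, subst infsum_cong_neutral[where T="{j}" and g="\<lambda>_. A i j" for i]) auto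

lemma form_basis: "form (basis i) A (basis j) = A i j"
  by (simp add: form_def mat_app_basis cinner_basis)

lemma form_outer: "form p (outer x y) q = cinner p x * cinner y q"
proof -
  have "mat_app (outer x y) q = (\<lambda>i. x i * cinner y q)"
    unfolding mat_app_def outer_def cinner_def
    by (simp add: mult.assoc infsum_cmult_right')
  thus ?thesis unfolding form_def cinner_def
    by (simp add: mult.assoc[symmetric] infsum_cmult_left')
qed

lemma cinner_cnj: "cinner y x = cnj (cinner x y)"
  unfolding cinner_def by (simp flip: infsum_cnj add: mult.commute)

lemma form_lscale: "form (\<lambda>i. c * x i) A y = cnj c * form x A y"
  unfolding form_def cinner_def by (simp add: mult.assoc infsum_cmult_right')

lemma form_rscale: "form x A (\<lambda>i. c * y i) = c * form x A y"
proof -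
  have "mat_app A (\<lambda>i. c * y i) = (\<lambda>i. c * mat_app A y i)"
    unfolding mat_app_def by (simp add: mult.left_commute infsum_cmult_right')
  thus ?thesis unfolding form_def cinner_def by (simp add: mult.left_commute infsum_cmult_right')
qed



lemma qds_tc: "qds T \<Longrightarrow> t \<ge> 0 \<Longrightarrow> trace_class A \<Longrightarrow> trace_class (T t A)"
  by (simp add: qds_def)
lemma qds_lin: "qds T \<Longrightarrow> t \<ge> 0 \<Longrightarrow> tc_linear (T t)"
  by (simp add: qds_def)
lemma qds_cp: "qds T \<Longrightarrow> t \<ge> 0 \<Longrightarrow> cp_on ell2 (T t)"
  by (simp add: qds_def)

lemma basis_ell2: "basis k \<in> ell2"
  by (rule ell2_fin) (simp add: basis_def)

lemma gen_lim:
  assumes q: "qds T" and g: "has_gen T A B" and x: "x \<in> ell2" and y: "y \<in> ell2"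
  shows "((\<lambda>t. (form x (T t A) y - form x A y) / complex_of_real t) \<longlongrightarrow> form x B y) (at_right 0)"
proof -
  have tA: "trace_class A" and tB: "trace_class B" and lim: "((\<lambda>t. tnorm (msub (mscale (complex_of_real (1 / t)) (msub (T t A) A)) B)) \<longlongrightarrow> 0) (at_right 0)"
    using g by (auto simp: has_gen_def)
  define M where "M t = msub (mscale (complex_of_real (1 / t)) (msub (T t A) A)) B" for t
  have ev: "\<forall>\<^sub>F t in at_right (0::real). t > 0" by (rule eventually_at_right_less)
  have tcM: "t > 0 \<Longrightarrow> trace_class (M t)" for t
    unfolding M_def using qds_tc[OF q _ tA] tA tB by (auto intro!: tc_sub tc_scale)
  have fM: "t > 0 \<Longrightarrow> form x (M t) y = (form x (T t A) y - form x A y) / complex_of_real t - form x B y" for t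
    unfolding M_def using qds_tc[OF q _ tA] tA tB x y
    by (simp add: form_sub tc_sub tc_scale form_scale divide_inverse mult.commute of_real_inverse)
  have "((\<lambda>t. form x (M t) y) \<longlongrightarrow> 0) (at_right 0)"
  proof (rule Lim_null_comparison)
    show "\<forall>\<^sub>F t in at_right 0. norm (form x (M t) y) \<le> vnorm x * vnorm y * tnorm (M t)"
      using ev by eventually_elim (rule form_bound[OF tcM x y])
    show "((\<lambda>t. vnorm x * vnorm y * tnorm (M t)) \<longlongrightarrow> 0) (at_right 0)"
      using tendsto_mult_right_zero[OF lim[folded M_def], of "vnorm x * vnorm y"] by (simp add: M_def)
  qed
  hence "((\<lambda>t. form x (M t) y + form x B y) \<longlongrightarrow> 0 + form x B y) (at_right 0)"
    by (intro tendsto_add) auto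
  moreover have "\<forall>\<^sub>F t in at_right 0. form x (M t) y + form x B y = (form x (T t A) y - form x A y) / complex_of_real t"
    using ev by eventually_elim (simp add: fM)
  ultimately show ?thesis by (simp add: tendsto_cong)
qed

lemma gen_lim_entry:
  assumes q: "qds T" and g: "has_gen T A B"
  shows "((\<lambda>t. (T t A i j - A i j) / complex_of_real t) \<longlongrightarrow> B i j) (at_right 0)"
  using gen_lim[OF q g basis_ell2 basis_ell2, of i j] by (simp add: form_basis)

lemma gen_unique:
  assumes q: "qds T" and "has_gen T A B" "has_gen T A B'"
  shows "B = B'"
proof (intro ext)
  fix i j
  show "B i j = B' i j"
    using tendsto_unique[OF trivial_limit_at_right_real gen_lim_entry[OF q assms(2)] gen_lim_entry[OF q assms(3)]] .
qed

lemma gen_eq: "qds T \<Longrightarrow> has_gen T A B \<Longrightarrow> gen T A = B"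
  unfolding gen_def using gen_unique by blast

lemma gen_has: "qds T \<Longrightarrow> A \<in> gen_dom T \<Longrightarrow> has_gen T A (gen T A)"
  unfolding gen_dom_def using gen_eq by blast

lemma gen_lin:
  assumes q: "qds T" and A: "A \<in> gen_dom T" and A': "A' \<in> gen_dom T"
    and C: "madd (mscale a A) (mscale b A') \<in> gen_dom T"
  shows "gen T (madd (mscale a A) (mscale b A')) = madd (mscale a (gen T A)) (mscale b (gen T A'))"
proof (intro ext)
  fix i j
  let ?C = "madd (mscale a A) (mscale b A')"
  have hA: "has_gen T A (gen T A)" and hA': "has_gen T A' (gen T A')" and hC: "has_gen T ?C (gen T ?C)"
    using gen_has[OF q] A A' C by auto
  have tA: "trace_class A" "trace_class A'" using hA hA' by (auto simp: has_gen_def)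
  have ev: "\<forall>\<^sub>F t in at_right (0::real). t > 0" by (rule eventually_at_right_less)
  have l: "((\<lambda>t. a * ((T t A i j - A i j) / complex_of_real t) + b * ((T t A' i j - A' i j) / complex_of_real t))
      \<longlongrightarrow> a * gen T A i j + b * gen T A' i j) (at_right 0)"
    by (intro tendsto_add tendsto_mult_left gen_lim_entry[OF q hA] gen_lim_entry[OF q hA'])
  have "\<forall>\<^sub>F t in at_right 0. a * ((T t A i j - A i j) / complex_of_real t) + b * ((T t A' i j - A' i j) / complex_of_real t)
      = (T t ?C i j - ?C i j) / complex_of_real t"
    using ev
  proof eventually_elim
    case (elim t)
    have "T t ?C = madd (mscale a (T t A)) (mscale b (T t A'))"
      using qds_lin[OF q, of t] elim tA unfolding tc_linear_def by auto
    thus ?case by (simp add: madd_def mscale_def algebra_simps diff_divide_distrib add_divide_distrib)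
  qed
  hence "((\<lambda>t. (T t ?C i j - ?C i j) / complex_of_real t) \<longlongrightarrow> a * gen T A i j + b * gen T A' i j) (at_right 0)"
    using l by (simp add: tendsto_cong)
  from tendsto_unique[OF trivial_limit_at_right_real gen_lim_entry[OF q hC] this]
  show "gen T ?C i j = madd (mscale a (gen T A)) (mscale b (gen T A')) i j"
    by (simp add: madd_def mscale_def)
qed



lemma cnonneg_lim:
  assumes f: "(f \<longlongrightarrow> z) (at_right (0::real))" and ev: "\<forall>\<^sub>F t in at_right 0. cnonneg (f t)"
  shows "cnonneg z"
proof -
  have e1: "\<forall>\<^sub>F t in at_right 0. 0 = Im (f t)" using ev by (rule eventually_mono) (simp add: cnonneg_def)
  have e2: "\<forall>\<^sub>F t in at_right 0. 0 \<le> Re (f t)" using ev by (rule eventually_mono) (simp add: cnonneg_def)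
  have l1: "((\<lambda>t. Im (f t)) \<longlongrightarrow> Im z) (at_right 0)" by (rule tendsto_Im[OF f])
  have l2: "((\<lambda>t. Im (f t)) \<longlongrightarrow> 0) (at_right 0)" by (rule Lim_transform_eventually[OF tendsto_const e1])
  have i: "Im z = 0" by (rule tendsto_unique[OF trivial_limit_at_right_real l1 l2])
  have r: "0 \<le> Re z" by (rule tendsto_lowerbound[OF tendsto_Re[OF f] e2 trivial_limit_at_right_real])
  show ?thesis using i r by (simp add: cnonneg_def)
qed

lemma cnonneg_div: "cnonneg z \<Longrightarrow> t > 0 \<Longrightarrow> cnonneg (z / complex_of_real t)"
  by (simp add: cnonneg_def Re_divide_of_real Im_divide_of_real)

lemma cp_form:
  fixes N :: nat
  assumes "cp_on D \<Phi>" "\<And>k. k < N \<Longrightarrow> \<phi> k \<in> D \<and> \<psi> k \<in> ell2"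
  shows "cnonneg (\<Sum>k<N. \<Sum>l<N. form (\<psi> k) (\<Phi> (outer (\<phi> k) (\<phi> l))) (\<psi> l))"
proof -
  have h: "\<forall>k<N. \<phi> k \<in> D \<and> \<psi> k \<in> ell2" using assms(2) by blast
  have "\<forall>(N::nat) \<phi> \<psi>. (\<forall>k<N. \<phi> k \<in> D \<and> \<psi> k \<in> ell2) \<longrightarrow> cnonneg (\<Sum>k<N. \<Sum>l<N. cinner (\<psi> k) (mat_app (\<Phi> (outer (\<phi> k) (\<phi> l))) (\<psi> l)))"
    using assms(1) unfolding cp_on_def .
  hence "cnonneg (\<Sum>k<N. \<Sum>l<N. cinner (\<psi> k) (mat_app (\<Phi> (outer (\<phi> k) (\<phi> l))) (\<psi> l)))"
    using h by blast
  thus ?thesis unfolding form_def .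
qed

lemma cp_diag:
  assumes "cp_on ell2 \<Phi>" "x \<in> ell2" "p \<in> ell2"
  shows "Im (form p (\<Phi> (outer x x)) p) = 0"
  using cp_form[OF assms(1), of "1::nat" "\<lambda>_. x" "\<lambda>_. p"] assms by (simp add: cnonneg_def)

lemma cp_two:
  assumes "cp_on ell2 \<Phi>" "x \<in> ell2" "y \<in> ell2" "p \<in> ell2" "q \<in> ell2"
  shows "cnonneg (form p (\<Phi> (outer x x)) p + form p (\<Phi> (outer x y)) q + (form q (\<Phi> (outer y x)) p + form q (\<Phi> (outer y y)) q))"
proof -
  have "cnonneg (\<Sum>k<(2::nat). \<Sum>l<(2::nat). form ((\<lambda>k. if k = 0 then p else q) k) (\<Phi> (outer ((\<lambda>k. if k = 0 then x else y) k) ((\<lambda>k. if k = 0 then x else y) l))) ((\<lambda>k. if k = 0 then p else q) l))"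
    by (rule cp_form[OF assms(1)]) (use assms in auto)
  thus ?thesis by (simp add: numeral_2_eq_2)
qed

lemma herm_cp:
  assumes cp: "cp_on ell2 \<Phi>" and x: "x \<in> ell2" and y: "y \<in> ell2" and p: "p \<in> ell2" and q: "q \<in> ell2"
  shows "form q (\<Phi> (outer y x)) p = cnj (form p (\<Phi> (outer x y)) q)"
proof -
  define B where "B = form p (\<Phi> (outer x y)) q"
  define C where "C = form q (\<Phi> (outer y x)) p"
  have d1: "Im (form p (\<Phi> (outer x x)) p) = 0" by (rule cp_diag[OF cp x p])
  have d2: "Im (form q (\<Phi> (outer y y)) q) = 0" by (rule cp_diag[OF cp y q])
  have 1: "Im B + Im C = 0"
    using cp_two[OF cp x y p q] d1 d2 by (simp add: cnonneg_def B_def C_def)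
  have iq: "(\<lambda>i. \<i> * q i) \<in> ell2" by (rule ell2_scale[OF q])
  have "cnonneg (form p (\<Phi> (outer x x)) p + \<i> * B + (- \<i> * C + form q (\<Phi> (outer y y)) q))"
    using cp_two[OF cp x y p iq] by (simp add: form_lscale form_rscale B_def C_def)
  hence 2: "Re B - Re C = 0" using d1 d2 by (simp add: cnonneg_def)
  have "C = cnj B" using 1 2 by (simp add: complex_eq_iff)
  thus ?thesis by (simp add: B_def C_def)
qed

lemma herm_gen:
  assumes q0: "qds T" and x: "x \<in> ell2" and y: "y \<in> ell2" and p: "p \<in> ell2" and q: "q \<in> ell2"
    and d1: "outer x y \<in> gen_dom T" and d2: "outer y x \<in> gen_dom T"
  shows "form q (gen T (outer y x)) p = cnj (form p (gen T (outer x y)) q)"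
proof -
  have h1: "has_gen T (outer x y) (gen T (outer x y))" by (rule gen_has[OF q0 d1])
  have h2: "has_gen T (outer y x) (gen T (outer y x))" by (rule gen_has[OF q0 d2])
  have l1: "((\<lambda>t. cnj ((form p (T t (outer x y)) q - form p (outer x y) q) / complex_of_real t)) \<longlongrightarrow> cnj (form p (gen T (outer x y)) q)) (at_right 0)"
    by (intro tendsto_cnj gen_lim[OF q0 h1 p q])
  have ev: "\<forall>\<^sub>F t in at_right (0::real). t > 0" by (rule eventually_at_right_less)
  have "\<forall>\<^sub>F t in at_right 0. cnj ((form p (T t (outer x y)) q - form p (outer x y) q) / complex_of_real t)
     = (form q (T t (outer y x)) p - form q (outer y x) p) / complex_of_real t"
    using ev
  proof eventually_elim
    case (elim t)
    have "form q (T t (outer y x)) p = cnj (form p (T t (outer x y)) q)"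
      by (rule herm_cp[OF qds_cp[OF q0] x y p q]) (use elim in simp)
    moreover have "form q (outer y x) p = cnj (form p (outer x y) q)"
      by (simp add: form_outer cinner_cnj[of q y] cinner_cnj[of x p] mult.commute)
    ultimately show ?case by simp
  qed
  hence "((\<lambda>t. (form q (T t (outer y x)) p - form q (outer y x) p) / complex_of_real t) \<longlongrightarrow> cnj (form p (gen T (outer x y)) q)) (at_right 0)"
    by (rule Lim_transform_eventually[OF l1])
  from tendsto_unique[OF trivial_limit_at_right_real gen_lim[OF q0 h2 q p] this]
  show ?thesis .
qed

lemma ccp:
  fixes N :: nat
  assumes q0: "qds T" and hyp: "\<And>k. k < N \<Longrightarrow> \<phi> k \<in> ell2 \<and> \<psi> k \<in> ell2"
    and dom: "\<And>k l. k < N \<Longrightarrow> l < N \<Longrightarrow> outer (\<phi> k) (\<phi> l) \<in> gen_dom T"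
    and z: "(\<Sum>k<N. cinner (\<psi> k) (\<phi> k)) = 0"
  shows "cnonneg (\<Sum>k<N. \<Sum>l<N. form (\<psi> k) (gen T (outer (\<phi> k) (\<phi> l))) (\<psi> l))"
proof (rule cnonneg_lim)
  let ?Q = "\<lambda>t k l. (form (\<psi> k) (T t (outer (\<phi> k) (\<phi> l))) (\<psi> l) - form (\<psi> k) (outer (\<phi> k) (\<phi> l)) (\<psi> l)) / complex_of_real t"
  show "((\<lambda>t. \<Sum>k<N. \<Sum>l<N. ?Q t k l) \<longlongrightarrow> (\<Sum>k<N. \<Sum>l<N. form (\<psi> k) (gen T (outer (\<phi> k) (\<phi> l))) (\<psi> l))) (at_right 0)"
  proof (intro tendsto_sum)
    fix k l assume "k \<in> {..<N}" "l \<in> {..<N}"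
    hence "has_gen T (outer (\<phi> k) (\<phi> l)) (gen T (outer (\<phi> k) (\<phi> l)))"
      using dom gen_has[OF q0] by auto
    thus "((\<lambda>t. ?Q t k l) \<longlongrightarrow> form (\<psi> k) (gen T (outer (\<phi> k) (\<phi> l))) (\<psi> l)) (at_right 0)"
      using gen_lim[OF q0] hyp \<open>k \<in> _\<close> \<open>l \<in> _\<close> by auto
  qed
  have ev: "\<forall>\<^sub>F t in at_right (0::real). t > 0" by (rule eventually_at_right_less)
  have s0: "(\<Sum>k<N. \<Sum>l<N. form (\<psi> k) (outer (\<phi> k) (\<phi> l)) (\<psi> l)) = 0"
    by (simp add: form_outer sum_distrib_left[symmetric] sum_distrib_right[symmetric] z)
  show "\<forall>\<^sub>F t in at_right 0. cnonneg (\<Sum>k<N. \<Sum>l<N. ?Q t k l)"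
    using ev
  proof eventually_elim
    case (elim t)
    have e: "(\<Sum>k<N. \<Sum>l<N. ?Q t k l) = (\<Sum>k<N. \<Sum>l<N. form (\<psi> k) (T t (outer (\<phi> k) (\<phi> l))) (\<psi> l)) / complex_of_real t"
      using s0 by (simp add: sum_divide_distrib[symmetric] sum_subtractf)
    have "cnonneg (\<Sum>k<N. \<Sum>l<N. form (\<psi> k) (T t (outer (\<phi> k) (\<phi> l))) (\<psi> l))"
      by (rule cp_form[OF qds_cp[OF q0]]) (use elim hyp in auto)
    thus ?case unfolding e using elim by (rule cnonneg_div)
  qed
qed



definition zmat :: "'i mat" where "zmat = (\<lambda>i j. 0)"

definition msum :: "'a set \<Rightarrow> ('a \<Rightarrow> 'i mat) \<Rightarrow> 'i mat" where
  "msum S f = (\<lambda>i j. \<Sum>k\<in>S. f k i j)"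

lemma De2_zero: "zmat \<in> De2" by (simp add: De2_def zmat_def)

lemma De2_madd: assumes "A \<in> De2" "B \<in> De2" shows "madd A B \<in> De2"
proof -
  have "{(i, j). madd A B i j \<noteq> 0} \<subseteq> {(i, j). A i j \<noteq> 0} \<union> {(i, j). B i j \<noteq> 0}"
    by (auto simp: madd_def)
  thus ?thesis using assms unfolding De2_def by (auto intro: finite_subset)
qed

lemma De2_mscale: assumes "A \<in> De2" shows "mscale c A \<in> De2"
proof -
  have "{(i, j). mscale c A i j \<noteq> 0} \<subseteq> {(i, j). A i j \<noteq> 0}"
    by (auto simp: mscale_def)
  thus ?thesis using assms unfolding De2_def by (auto intro: finite_subset)
qed

lemma De2_outer: assumes "x \<in> De" "y \<in> De" shows "outer x y \<in> De2"
proof -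
  have "{(i, j). outer x y i j \<noteq> 0} \<subseteq> {i. x i \<noteq> 0} \<times> {j. y j \<noteq> 0}" by (auto simp: outer_def)
  thus ?thesis using assms unfolding De2_def De_def by (auto intro: finite_subset)
qed

lemma msum_empty: "msum {} f = zmat" by (simp add: msum_def zmat_def)

lemma msum_insert: "finite S \<Longrightarrow> k \<notin> S \<Longrightarrow> msum (insert k S) (\<lambda>k. mscale (a k) (f k)) = madd (mscale 1 (msum S (\<lambda>k. mscale (a k) (f k)))) (mscale (a k) (f k))"
  by (simp add: msum_def madd_def mscale_def add.commute)

lemma msum_insert': "finite S \<Longrightarrow> k \<notin> S \<Longrightarrow> msum (insert k S) f = madd (f k) (msum S f)"
  by (simp add: msum_def madd_def)

lemma De2_msum: "finite S \<Longrightarrow> (\<And>k. k \<in> S \<Longrightarrow> f k \<in> De2) \<Longrightarrow> msum S f \<in> De2"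
  by (induction S rule: finite_induct) (auto simp: msum_empty msum_insert' De2_zero De2_madd)

lemma tc_zero: "trace_class (zmat :: 'i mat)"
proof -
  have z: "(\<lambda>_::'i. 0::complex) \<in> ell2" by (rule ell2_fin) simp
  have "zmat = outer (\<lambda>_::'i. 0::complex) (\<lambda>_. 0)" by (simp add: zmat_def outer_def)
  thus ?thesis using tc_outer[OF z z] by simp
qed

lemma tc_msum: "finite S \<Longrightarrow> (\<And>k. k \<in> S \<Longrightarrow> trace_class (f k)) \<Longrightarrow> trace_class (msum S f)"
  by (induction S rule: finite_induct) (auto simp: msum_empty msum_insert' tc_zero tc_add)

lemma form_zero: "form x zmat y = 0"
  by (simp add: form_def cinner_def mat_app_def zmat_def)

lemma form_msum:
  assumes "finite S" "\<And>k. k \<in> S \<Longrightarrow> trace_class (f k)" "x \<in> ell2" "y \<in> ell2"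
  shows "form x (msum S f) y = (\<Sum>k\<in>S. form x (f k) y)"
  using assms
proof (induction S rule: finite_induct)
  case empty thus ?case by (simp add: msum_empty form_zero)
next
  case (insert k S)
  thus ?case by (simp add: msum_insert' form_add tc_msum)
qed

lemma gen_zero:
  assumes q: "qds T" and d: "De2 \<subseteq> gen_dom T"
  shows "gen T zmat = zmat"
proof -
  have z: "zmat \<in> gen_dom T" using d De2_zero by auto
  have e: "madd (mscale 0 zmat) (mscale 0 zmat) = (zmat :: 'a mat)" by (simp add: madd_def mscale_def zmat_def)
  have "gen T (madd (mscale 0 zmat) (mscale 0 zmat)) = madd (mscale 0 (gen T zmat)) (mscale 0 (gen T zmat))"
    by (rule gen_lin[OF q z z]) (simp add: e z)
  thus ?thesis by (simp add: e) (simp add: madd_def mscale_def zmat_def)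
qed

lemma gen_msum:
  assumes q: "qds T" and d: "De2 \<subseteq> gen_dom T" and S: "finite S" and f: "\<And>k. k \<in> S \<Longrightarrow> f k \<in> De2"
  shows "gen T (msum S (\<lambda>k. mscale (a k) (f k))) = msum S (\<lambda>k. mscale (a k) (gen T (f k)))"
  using S f
proof (induction S rule: finite_induct)
  case empty thus ?case by (simp add: msum_empty gen_zero[OF q d])
next
  case (insert k S)
  have m: "msum S (\<lambda>k. mscale (a k) (f k)) \<in> De2" using insert by (auto intro!: De2_msum De2_mscale)
  have fk: "f k \<in> De2" using insert by auto
  have "gen T (msum (insert k S) (\<lambda>k. mscale (a k) (f k)))
      = madd (mscale 1 (gen T (msum S (\<lambda>k. mscale (a k) (f k))))) (mscale (a k) (gen T (f k)))"
    unfolding msum_insert[OF insert(1,2)]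
    by (rule gen_lin[OF q]) (use m fk d in \<open>auto intro!: De2_madd De2_mscale\<close>)
  also have "\<dots> = msum (insert k S) (\<lambda>k. mscale (a k) (gen T (f k)))"
    using insert by (simp add: msum_insert[OF insert(1,2)])
  finally show ?case .
qed



lemma vnorm_fin: assumes "finite F" "\<And>i. i \<notin> F \<Longrightarrow> x i = 0"
  shows "vnorm x = sqrt (\<Sum>i\<in>F. (cmod (x i))^2)"
  unfolding vnorm_def using assms by (subst infsum_cong_neutral[where T=F and g="\<lambda>i. (cmod (x i))^2"]) auto

lemma cinner_fin: assumes "finite F" "\<And>i. i \<notin> F \<Longrightarrow> cnj (x i) * y i = 0"
  shows "cinner x y = (\<Sum>i\<in>F. cnj (x i) * y i)"
  unfolding cinner_def using assms by (subst infsum_cong_neutral[where T=F and g="\<lambda>i. cnj (x i) * y i"]) auto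

lemma vnorm_basis: "vnorm (basis k) = 1"
  by (subst vnorm_fin[of "{k}"]) (auto simp: basis_def)

lemma col_ell2: assumes B: "trace_class B" shows "(\<lambda>i. B i j) \<in> ell2"
proof -
  let ?t = "tnorm B"
  have bnd: "(\<Sum>i\<in>F. (cmod (B i j))^2) \<le> ?t^2" if F: "finite F" for F
  proof -
    define s where "s = (\<Sum>i\<in>F. (cmod (B i j))^2)"
    define z where "z = (\<lambda>i. if i \<in> F then B i j else 0)"
    have s0: "s \<ge> 0" unfolding s_def by (auto intro: sum_nonneg)
    have zl: "z \<in> ell2" by (rule ell2_fin) (rule finite_subset[OF _ F], auto simp: z_def)
    have vz: "vnorm z = sqrt s" unfolding s_def by (subst vnorm_fin[OF F]) (auto simp: z_def)
    have "form z B (basis j) = cinner z (\<lambda>i. B i j)" by (simp add: form_def mat_app_basis)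
    also have "\<dots> = (\<Sum>i\<in>F. cnj (z i) * B i j)" by (rule cinner_fin[OF F]) (simp add: z_def)
    also have "\<dots> = (\<Sum>i\<in>F. complex_of_real ((cmod (B i j))^2))"
      by (rule sum.cong) (auto simp: z_def complex_norm_square mult.commute simp del: of_real_power)
    also have "\<dots> = complex_of_real s" by (simp add: s_def)
    finally have fz: "form z B (basis j) = complex_of_real s" .
    have "s \<le> sqrt s * ?t"
      using form_bound[OF B zl basis_ell2, of j] by (simp add: fz vz vnorm_basis s0)
    show ?thesis
    proof (cases "s = 0")
      case True thus ?thesis by (simp add: s_def[symmetric])
    next
      case False
      hence sp: "sqrt s > 0" using s0 by simp
      have "sqrt s * sqrt s \<le> sqrt s * ?t" using \<open>s \<le> sqrt s * ?t\<close> s0 by simp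
      hence "sqrt s \<le> ?t" using mult_le_cancel_left_pos[OF sp] by blast
      hence "(sqrt s)^2 \<le> ?t^2" by (rule power_mono) (simp add: s0)
      thus ?thesis using s0 by (simp add: s_def[symmetric])
    qed
  qed
  have "(\<lambda>i. (cmod (B i j))^2) summable_on UNIV"
    by (rule nonneg_bdd_above_summable_on) (auto intro!: bdd_aboveI2[where M="?t^2"] bnd)
  thus ?thesis by (simp add: ell2_def)
qed

lemma ell2_zero: "(\<lambda>_. 0::complex) \<in> ell2" by (rule ell2_fin) simp

lemma ell2_sum: "finite S \<Longrightarrow> (\<And>k. k \<in> S \<Longrightarrow> f k \<in> ell2) \<Longrightarrow> (\<lambda>i. \<Sum>k\<in>S. f k i) \<in> ell2"
  by (induction S rule: finite_induct) (auto simp: ell2_zero intro!: ell2_add)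

lemma cinner_add: "x \<in> ell2 \<Longrightarrow> y \<in> ell2 \<Longrightarrow> z \<in> ell2 \<Longrightarrow> cinner x (\<lambda>i. y i + z i) = cinner x y + cinner x z"
  unfolding cinner_def by (simp add: distrib_left infsum_add cinner_summable)

lemma cinner_scale: "cinner x (\<lambda>i. c * y i) = c * cinner x y"
  unfolding cinner_def by (simp add: mult.left_commute infsum_cmult_right')

lemma cinner_sum: "finite S \<Longrightarrow> x \<in> ell2 \<Longrightarrow> (\<And>k. k \<in> S \<Longrightarrow> f k \<in> ell2) \<Longrightarrow>
   cinner x (\<lambda>i. \<Sum>k\<in>S. c k * f k i) = (\<Sum>k\<in>S. c k * cinner x (f k))"
proof (induction S rule: finite_induct)
  case empty thus ?case by (simp add: cinner_def)
next
  case (insert k S)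
  have "cinner x (\<lambda>i. \<Sum>k\<in>insert k S. c k * f k i) = cinner x (\<lambda>i. c k * f k i + (\<Sum>k\<in>S. c k * f k i))"
    using insert by simp
  also have "\<dots> = cinner x (\<lambda>i. c k * f k i) + cinner x (\<lambda>i. \<Sum>k\<in>S. c k * f k i)"
    using insert by (intro cinner_add) (auto intro!: ell2_scale ell2_sum)
  finally show ?case using insert by (simp add: cinner_scale)
qed

lemma mat_app_De: assumes "x \<in> De" shows "mat_app A x = (\<lambda>i. \<Sum>j\<in>{j. x j \<noteq> 0}. A i j * x j)"
  unfolding mat_app_def using assms unfolding De_def
  by (intro ext, subst infsum_cong_neutral[where T="{j. x j \<noteq> 0}" and g="\<lambda>j. A i j * x j" for i]) auto

lemma basis_De: "basis k \<in> De" by (simp add: De_def basis_def)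

definition cc :: "(real \<Rightarrow> 'i mat \<Rightarrow> 'i mat) \<Rightarrow> 'i vec \<Rightarrow> complex" where
  "cc T chi = (1/2) * form chi (gen T (outer chi chi)) chi"

lemma Mop_eq: "Mop T chi \<psi> = (\<lambda>i. (-1) * mat_app (gen T (outer \<psi> chi)) chi i + cc T chi * \<psi> i)"
  by (simp add: Mop_def cc_def form_def)

lemma mat_app_tc_ell2: assumes "trace_class B" "x \<in> De" shows "mat_app B x \<in> ell2"
  unfolding mat_app_De[OF assms(2)]
proof (rule ell2_sum)
  show "finite {j. x j \<noteq> 0}" using assms(2) by (simp add: De_def)
  fix j show "(\<lambda>i. B i j * x j) \<in> ell2"
    using ell2_scale[OF col_ell2[OF assms(1)], of "x j" j] by (simp add: mult.commute)
qed

lemma gen_tc: "qds T \<Longrightarrow> A \<in> gen_dom T \<Longrightarrow> trace_class (gen T A)"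
  using gen_has has_gen_def by blast

lemma Mop_ell2: assumes q: "qds T" and d: "De2 \<subseteq> gen_dom T" and chi: "chi \<in> De" and p: "\<psi> \<in> De"
  shows "Mop T chi \<psi> \<in> ell2"
proof -
  have "outer \<psi> chi \<in> gen_dom T" using De2_outer[OF p chi] d by auto
  hence "mat_app (gen T (outer \<psi> chi)) chi \<in> ell2" by (intro mat_app_tc_ell2 gen_tc[OF q] chi)
  thus ?thesis unfolding Mop_eq by (intro ell2_add ell2_scale De_ell2[OF p])
qed

lemma Mop_inner: assumes q: "qds T" and d: "De2 \<subseteq> gen_dom T" and chi: "chi \<in> De" and p: "\<psi> \<in> De" and x: "x \<in> ell2"
  shows "cinner x (Mop T chi \<psi>) = - form x (gen T (outer \<psi> chi)) chi + cc T chi * cinner x \<psi>"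
proof -
  have "outer \<psi> chi \<in> gen_dom T" using De2_outer[OF p chi] d by auto
  hence m: "mat_app (gen T (outer \<psi> chi)) chi \<in> ell2" by (intro mat_app_tc_ell2 gen_tc[OF q] chi)
  have "cinner x (\<lambda>i. (-1) * mat_app (gen T (outer \<psi> chi)) chi i + cc T chi * \<psi> i)
      = cinner x (\<lambda>i. (-1) * mat_app (gen T (outer \<psi> chi)) chi i) + cinner x (\<lambda>i. cc T chi * \<psi> i)"
    by (rule cinner_add[OF x ell2_scale[OF m] ell2_scale[OF De_ell2[OF p]]])
  also have "\<dots> = - form x (gen T (outer \<psi> chi)) chi + cc T chi * cinner x \<psi>"
    by (simp only: cinner_scale form_def) simp
  finally show ?thesis unfolding Mop_eq .
qed



definition Mv :: "(real \<Rightarrow> 'i mat \<Rightarrow> 'i mat) \<Rightarrow> 'i vec \<Rightarrow> 'i vec \<Rightarrow> 'i vec" where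
  "Mv T chi \<phi> = (\<lambda>i. \<Sum>k\<in>{k. \<phi> k \<noteq> 0}. \<phi> k * Mop T chi (basis k) i)"

lemma Lplus_outer:
  assumes p: "\<phi> \<in> De" and p': "\<phi>' \<in> De"
  shows "Lplus T chi (outer \<phi> \<phi>') = madd (madd (gen T (outer \<phi> \<phi>')) (outer (Mv T chi \<phi>) \<phi>')) (outer \<phi> (Mv T chi \<phi>'))"
proof (intro ext)
  fix i j
  have f1: "finite {k. \<phi> k \<noteq> 0}" "finite {k. \<phi>' k \<noteq> 0}" using p p' by (auto simp: De_def)
  have e1: "infsum (\<lambda>k. Mop T chi (basis k) i * outer \<phi> \<phi>' k j) UNIV
      = (\<Sum>k\<in>{k. \<phi> k \<noteq> 0}. Mop T chi (basis k) i * outer \<phi> \<phi>' k j)"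
    using f1 by (subst infsum_cong_neutral[where T="{k. \<phi> k \<noteq> 0}" and g="\<lambda>k. Mop T chi (basis k) i * outer \<phi> \<phi>' k j"]) (auto simp: outer_def)
  have e2: "infsum (\<lambda>l. outer \<phi> \<phi>' i l * cnj (Mop T chi (basis l) j)) UNIV
      = (\<Sum>l\<in>{l. \<phi>' l \<noteq> 0}. outer \<phi> \<phi>' i l * cnj (Mop T chi (basis l) j))"
    using f1 by (subst infsum_cong_neutral[where T="{l. \<phi>' l \<noteq> 0}" and g="\<lambda>l. outer \<phi> \<phi>' i l * cnj (Mop T chi (basis l) j)"]) (auto simp: outer_def)
  show "Lplus T chi (outer \<phi> \<phi>') i j = madd (madd (gen T (outer \<phi> \<phi>')) (outer (Mv T chi \<phi>) \<phi>')) (outer \<phi> (Mv T chi \<phi>')) i j"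
    unfolding Lplus_def e1 e2
    by (simp add: madd_def outer_def Mv_def sum_distrib_left sum_distrib_right mult_ac)
qed

lemma cinner_lscale: "cinner (\<lambda>i. c * x i) y = cnj c * cinner x y"
  unfolding cinner_def by (simp add: mult.assoc infsum_cmult_right')

lemma Mv_ell2: assumes q: "qds T" and d: "De2 \<subseteq> gen_dom T" and chi: "chi \<in> De" and p: "\<phi> \<in> De"
  shows "Mv T chi \<phi> \<in> ell2"
  unfolding Mv_def using p
  by (intro ell2_sum) (auto simp: De_def intro!: ell2_scale Mop_ell2[OF q d chi] basis_De)

lemma outer_msum: assumes p: "\<phi> \<in> De"
  shows "msum {k. \<phi> k \<noteq> 0} (\<lambda>k. mscale (\<phi> k) (outer (basis k) chi)) = outer \<phi> chi"
proof (intro ext)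
  fix i j
  have f: "finite {k. \<phi> k \<noteq> 0}" using p by (simp add: De_def)
  have "(\<Sum>k\<in>{k. \<phi> k \<noteq> 0}. \<phi> k * (basis k i * cnj (chi j))) = \<phi> i * cnj (chi j)"
  proof (cases "\<phi> i = 0")
    case True
    have "(\<Sum>k\<in>{k. \<phi> k \<noteq> 0}. \<phi> k * (basis k i * cnj (chi j))) = 0"
      by (rule sum.neutral) (use True in \<open>auto simp: basis_def\<close>)
    thus ?thesis using True by simp
  next
    case False
    thus ?thesis using f by (subst sum.remove[of _ i]) (auto simp: basis_def intro!: sum.neutral split: if_splits)
  qed
  thus "msum {k. \<phi> k \<noteq> 0} (\<lambda>k. mscale (\<phi> k) (outer (basis k) chi)) i j = outer \<phi> chi i j"
    by (simp add: msum_def mscale_def outer_def)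
qed

lemma cinner_basis_r: "cinner x (basis k) = cnj (x k)"
  by (subst cinner_cnj) (simp add: cinner_basis)

lemma Mv_inner:
  assumes q: "qds T" and d: "De2 \<subseteq> gen_dom T" and chi: "chi \<in> De" and p: "\<phi> \<in> De" and x: "x \<in> ell2"
  shows "cinner x (Mv T chi \<phi>) = - form x (gen T (outer \<phi> chi)) chi + cc T chi * cinner x \<phi>"
proof -
  define S where "S = {k. \<phi> k \<noteq> 0}"
  have f: "finite S" using p by (simp add: De_def S_def)
  have dk: "\<And>k. outer (basis k) chi \<in> gen_dom T" using De2_outer[OF basis_De chi] d by auto
  have "cinner x (Mv T chi \<phi>) = (\<Sum>k\<in>S. \<phi> k * cinner x (Mop T chi (basis k)))"
    unfolding Mv_def S_def[symmetric] by (rule cinner_sum[OF f x Mop_ell2[OF q d chi basis_De]])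
  also have "\<dots> = (\<Sum>k\<in>S. - (\<phi> k * form x (gen T (outer (basis k) chi)) chi) + cc T chi * (\<phi> k * cnj (x k)))"
    by (rule sum.cong) (auto simp: Mop_inner[OF q d chi basis_De x] cinner_basis_r algebra_simps)
  also have "\<dots> = - (\<Sum>k\<in>S. form x (mscale (\<phi> k) (gen T (outer (basis k) chi))) chi) + cc T chi * (\<Sum>k\<in>S. cnj (x k) * \<phi> k)"
    by (simp add: sum.distrib sum_negf sum_distrib_left form_scale mult.commute sum_subtractf)
  also have "(\<Sum>k\<in>S. form x (mscale (\<phi> k) (gen T (outer (basis k) chi))) chi) = form x (gen T (outer \<phi> chi)) chi"
  proof -
    have "(\<Sum>k\<in>S. form x (mscale (\<phi> k) (gen T (outer (basis k) chi))) chi)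
        = form x (msum S (\<lambda>k. mscale (\<phi> k) (gen T (outer (basis k) chi)))) chi"
      by (rule form_msum[symmetric, OF f _ x De_ell2[OF chi]]) (intro tc_scale gen_tc[OF q dk])
    also have "msum S (\<lambda>k. mscale (\<phi> k) (gen T (outer (basis k) chi))) = gen T (outer \<phi> chi)"
      using gen_msum[OF q d f, of "\<lambda>k. outer (basis k) chi" \<phi>] outer_msum[OF p, of chi]
      by (simp add: S_def De2_outer[OF basis_De chi])
    finally show ?thesis .
  qed
  also have "(\<Sum>k\<in>S. cnj (x k) * \<phi> k) = cinner x \<phi>"
    by (rule cinner_fin[symmetric]) (use f in \<open>auto simp: S_def\<close>)
  finally show ?thesis .
qed

lemma Lplus_form:
  assumes q: "qds T" and d: "De2 \<subseteq> gen_dom T" and chi: "chi \<in> De" and p: "\<phi> \<in> De" and p': "\<phi>' \<in> De"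
    and x: "x \<in> ell2" and y: "y \<in> ell2"
  shows "form x (Lplus T chi (outer \<phi> \<phi>')) y = form x (gen T (outer \<phi> \<phi>')) y
     + cinner x (Mv T chi \<phi>) * cinner \<phi>' y + cinner x \<phi> * cinner (Mv T chi \<phi>') y"
proof -
  have g: "trace_class (gen T (outer \<phi> \<phi>'))" using De2_outer[OF p p'] d by (auto intro: gen_tc[OF q])
  have m: "Mv T chi \<phi> \<in> ell2" "Mv T chi \<phi>' \<in> ell2" using Mv_ell2[OF q d chi] p p' by auto
  have t1: "trace_class (outer (Mv T chi \<phi>) \<phi>')" by (rule tc_outer[OF m(1) De_ell2[OF p']])
  have t2: "trace_class (outer \<phi> (Mv T chi \<phi>'))" by (rule tc_outer[OF De_ell2[OF p] m(2)])
  show ?thesis unfolding Lplus_outer[OF p p']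
    by (simp add: form_add[OF tc_add[OF g t1] t2 x y] form_add[OF g t1 x y] form_outer)
qed

lemma Lplus_tc:
  assumes q: "qds T" and d: "De2 \<subseteq> gen_dom T" and chi: "chi \<in> De" and r: "\<rho> \<in> De2"
  shows "trace_class (Lplus T chi \<rho>)"
proof -
  define P where "P = {(i, j). \<rho> i j \<noteq> 0}"
  have fP: "finite P" using r by (simp add: De2_def P_def)
  define S1 where "S1 = fst ` P"
  define S2 where "S2 = snd ` P"
  have f: "finite S1" "finite S2" using fP by (auto simp: S1_def S2_def)
  have z1: "\<rho> k j = 0" if "k \<notin> S1" for k j using that by (force simp: S1_def P_def)
  have z2: "\<rho> i l = 0" if "l \<notin> S2" for i l using that by (force simp: S2_def P_def)
  have M: "\<And>k. Mop T chi (basis k) \<in> ell2" by (rule Mop_ell2[OF q d chi basis_De])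
  have e: "Lplus T chi \<rho> = madd (gen T \<rho>) (madd (msum S1 (\<lambda>k. outer (Mop T chi (basis k)) (\<lambda>j. cnj (\<rho> k j))))
               (msum S2 (\<lambda>l. outer (\<lambda>i. \<rho> i l) (Mop T chi (basis l)))))"
  proof (intro ext)
    fix i j
    have e1: "infsum (\<lambda>k. Mop T chi (basis k) i * \<rho> k j) UNIV = (\<Sum>k\<in>S1. Mop T chi (basis k) i * \<rho> k j)"
      using f z1 by (subst infsum_cong_neutral[where T=S1 and g="\<lambda>k. Mop T chi (basis k) i * \<rho> k j"]) auto
    have e2: "infsum (\<lambda>l. \<rho> i l * cnj (Mop T chi (basis l) j)) UNIV = (\<Sum>l\<in>S2. \<rho> i l * cnj (Mop T chi (basis l) j))"
      using f z2 by (subst infsum_cong_neutral[where T=S2 and g="\<lambda>l. \<rho> i l * cnj (Mop T chi (basis l) j)"]) auto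
    show "Lplus T chi \<rho> i j = madd (gen T \<rho>) (madd (msum S1 (\<lambda>k. outer (Mop T chi (basis k)) (\<lambda>j. cnj (\<rho> k j))))
               (msum S2 (\<lambda>l. outer (\<lambda>i. \<rho> i l) (Mop T chi (basis l))))) i j"
      unfolding Lplus_def e1 e2 by (simp add: madd_def msum_def outer_def)
  qed
  have v1: "(\<lambda>j. cnj (\<rho> k j)) \<in> ell2" for k
    by (rule ell2_fin, rule finite_subset[OF _ f(2)]) (use z2 in auto)
  have v2: "(\<lambda>i. \<rho> i l) \<in> ell2" for l
    by (rule ell2_fin, rule finite_subset[OF _ f(1)]) (use z1 in auto)
  show ?thesis unfolding e
    using r d by (intro tc_add gen_tc[OF q] tc_msum f tc_outer M v1 v2) auto
qed

lemma fin_alg: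
  fixes G a PS c :: complex assumes "cnj c = c"
  shows "G - cnj a * PS - a * cnj PS + cnj a * a * (2 * c) = G + (- PS + c * a) * cnj a + a * cnj (- PS + c * a)"
proof -
  have "a * cnj (- PS + c * a) = - a * cnj PS + c * a * cnj a" by (simp add: algebra_simps assms)
  thus ?thesis using assms by (simp add: algebra_simps)
qed



theorem proposition3p3:
  fixes T :: "real \<Rightarrow> ('i::countable) mat \<Rightarrow> 'i mat" and chi :: "'i vec"
  assumes "qds T" and "matrix_normal T" and "chi \<in> De" and "vnorm chi = 1"
  shows "De \<subseteq> Mdom T chi \<and> (\<forall>\<rho>\<in>De2. trace_class (Lplus T chi \<rho>)) \<and> cp_on De (Lplus T chi)"
proof -
  note q = assms(1) and chi = assms(3) and vn = assms(4)
  have d: "De2 \<subseteq> gen_dom T" using assms(2) matrix_normal_def by blast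
  have chl: "chi \<in> ell2" by (rule De_ell2[OF chi])
  have P1: "De \<subseteq> Mdom T chi" unfolding Mdom_def using De2_outer[OF _ chi] d De_ell2 by blast
  have P2: "\<forall>\<rho>\<in>De2. trace_class (Lplus T chi \<rho>)" using Lplus_tc[OF q d chi] by blast
  have cc1: "cinner chi chi = 1"
  proof -
    define S where "S = {i. chi i \<noteq> 0}"
    have f: "finite S" using chi by (simp add: De_def S_def)
    have "vnorm chi = sqrt (\<Sum>i\<in>S. (cmod (chi i))^2)" by (rule vnorm_fin[OF f]) (simp add: S_def)
    hence s1: "(\<Sum>i\<in>S. (cmod (chi i))^2) = 1" using vn by simp
    have "cinner chi chi = (\<Sum>i\<in>S. cnj (chi i) * chi i)" by (rule cinner_fin[OF f]) (simp add: S_def)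
    also have "\<dots> = (\<Sum>i\<in>S. complex_of_real ((cmod (chi i))^2))"
      by (rule sum.cong) (auto simp: complex_norm_square mult.commute simp del: of_real_power)
    also have "\<dots> = 1" using s1 by (simp del: of_real_power add: of_real_sum[symmetric])
    finally show ?thesis .
  qed
  have dcc: "outer chi chi \<in> gen_dom T" using De2_outer[OF chi chi] d by auto
  have creal: "cnj (cc T chi) = cc T chi"
    using herm_gen[OF q chl chl chl chl dcc dcc] by (simp add: cc_def)
  have P3: "cp_on De (Lplus T chi)"
    unfolding cp_on_def
  proof (intro allI impI)
    fix N :: nat and \<phi> \<psi> :: "nat \<Rightarrow> 'i vec" assume h: "\<forall>k<N. \<phi> k \<in> De \<and> \<psi> k \<in> ell2"
    define c where "c = cc T chi"
    define ak where "ak k = cinner (\<psi> k) (\<phi> k)" for k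
    define a where "a = (\<Sum>k<N. ak k)"
    define P where "P k = form (\<psi> k) (gen T (outer (\<phi> k) chi)) chi" for k
    define sv where "sv k = cinner (\<psi> k) (Mv T chi (\<phi> k))" for k
    define G where "G = (\<Sum>k<N. \<Sum>l<N. form (\<psi> k) (gen T (outer (\<phi> k) (\<phi> l))) (\<psi> l))"
    have hp: "\<And>k. k < N \<Longrightarrow> \<phi> k \<in> De" and hs: "\<And>k. k < N \<Longrightarrow> \<psi> k \<in> ell2" using h by auto
    have sv_eq: "\<And>k. k < N \<Longrightarrow> sv k = - P k + c * ak k"
      unfolding sv_def P_def c_def ak_def using Mv_inner[OF q d chi hp hs] by blast
    have target: "(\<Sum>k<N. \<Sum>l<N. cinner (\<psi> k) (mat_app (Lplus T chi (outer (\<phi> k) (\<phi> l))) (\<psi> l)))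
        = G + (- (\<Sum>k<N. P k) + c * a) * cnj a + a * cnj (- (\<Sum>k<N. P k) + c * a)"
    proof -
      have "(\<Sum>k<N. \<Sum>l<N. cinner (\<psi> k) (mat_app (Lplus T chi (outer (\<phi> k) (\<phi> l))) (\<psi> l)))
          = (\<Sum>k<N. \<Sum>l<N. form (\<psi> k) (gen T (outer (\<phi> k) (\<phi> l))) (\<psi> l) + sv k * cnj (ak l) + ak k * cnj (sv l))"
      proof (intro sum.cong refl)
        fix k l assume "k \<in> {..<N}" "l \<in> {..<N}"
        hence kl: "k < N" "l < N" by auto
        have mv: "Mv T chi (\<phi> l) \<in> ell2" by (rule Mv_ell2[OF q d chi hp[OF kl(2)]])
        show "cinner (\<psi> k) (mat_app (Lplus T chi (outer (\<phi> k) (\<phi> l))) (\<psi> l))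
           = form (\<psi> k) (gen T (outer (\<phi> k) (\<phi> l))) (\<psi> l) + sv k * cnj (ak l) + ak k * cnj (sv l)"
          using Lplus_form[OF q d chi hp[OF kl(1)] hp[OF kl(2)] hs[OF kl(1)] hs[OF kl(2)]]
          by (simp add: form_def sv_def ak_def cinner_cnj[of "\<phi> l"] cinner_cnj[of "Mv T chi (\<phi> l)"])
      qed
      also have "\<dots> = G + (\<Sum>k<N. sv k) * cnj a + a * cnj (\<Sum>k<N. sv k)"
        by (simp add: sum.distrib G_def a_def sum_product cnj_sum)
      also have "(\<Sum>k<N. sv k) = - (\<Sum>k<N. P k) + c * a"
        by (simp add: sv_eq a_def sum.distrib sum_negf sum_distrib_left sum_subtractf)
      finally show ?thesis .
    qed
    define \<phi>' where "\<phi>' k = (if k < N then \<phi> k else chi)" for k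
    define b where "b = - cnj a"
    define \<psi>' where "\<psi>' k = (if k < N then \<psi> k else (\<lambda>i. b * chi i))" for k
    have hp': "\<And>k. \<phi>' k \<in> De" using hp chi by (simp add: \<phi>'_def)
    have hs': "\<psi>' k \<in> ell2" for k
      using hs ell2_scale[OF chl, of b] unfolding \<psi>'_def by (cases "k < N") auto
    have z: "(\<Sum>k<Suc N. cinner (\<psi>' k) (\<phi>' k)) = 0"
    proof -
      have zl: "cinner (\<lambda>i. b * chi i) chi = cnj b * cinner chi chi" by (rule cinner_lscale)
      have e1: "\<psi>' N = (\<lambda>i. b * chi i)" "\<phi>' N = chi" by (simp_all add: \<psi>'_def \<phi>'_def)
      have zN: "cinner (\<psi>' N) (\<phi>' N) = cnj b" unfolding e1 zl cc1 by simp
      have "(\<Sum>k<Suc N. cinner (\<psi>' k) (\<phi>' k)) = (\<Sum>k<N. ak k) + cnj b"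
        unfolding sum.lessThan_Suc zN by (simp add: ak_def \<psi>'_def \<phi>'_def)
      thus ?thesis by (simp add: a_def[symmetric] b_def)
    qed
    have V: "cnonneg (\<Sum>k<Suc N. \<Sum>l<Suc N. form (\<psi>' k) (gen T (outer (\<phi>' k) (\<phi>' l))) (\<psi>' l))"
    proof (rule ccp[OF q])
      show "\<And>k. k < Suc N \<Longrightarrow> \<phi>' k \<in> ell2 \<and> \<psi>' k \<in> ell2" using hp' hs' De_ell2 by blast
      show "\<And>k l. k < Suc N \<Longrightarrow> l < Suc N \<Longrightarrow> outer (\<phi>' k) (\<phi>' l) \<in> gen_dom T"
        using De2_outer[OF hp' hp'] d by blast
      show "(\<Sum>k<Suc N. cinner (\<psi>' k) (\<phi>' k)) = 0" by (rule z)
    qed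
    have tN: "\<And>k. k < N \<Longrightarrow> form (\<psi>' k) (gen T (outer (\<phi>' k) (\<phi>' N))) (\<psi>' N) = - cnj a * P k"
      by (simp add: \<psi>'_def \<phi>'_def P_def form_rscale) (simp add: b_def)
    have Nt: "\<And>l. l < N \<Longrightarrow> form (\<psi>' N) (gen T (outer (\<phi>' N) (\<phi>' l))) (\<psi>' l) = - a * cnj (P l)"
    proof -
      fix l assume l: "l < N"
      have dl1: "outer (\<phi> l) chi \<in> gen_dom T" "outer chi (\<phi> l) \<in> gen_dom T"
        using De2_outer[OF hp[OF l] chi] De2_outer[OF chi hp[OF l]] d by auto
      have "form chi (gen T (outer chi (\<phi> l))) (\<psi> l) = cnj (form (\<psi> l) (gen T (outer (\<phi> l) chi)) chi)"
        by (rule herm_gen[OF q De_ell2[OF hp[OF l]] chl hs[OF l] chl dl1])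
      thus "form (\<psi>' N) (gen T (outer (\<phi>' N) (\<phi>' l))) (\<psi>' l) = - a * cnj (P l)"
        using l by (simp add: \<psi>'_def \<phi>'_def P_def form_lscale) (simp add: b_def)
    qed
    have NN: "form (\<psi>' N) (gen T (outer (\<phi>' N) (\<phi>' N))) (\<psi>' N) = cnj a * a * (2 * c)"
      by (simp add: \<psi>'_def \<phi>'_def form_lscale form_rscale c_def cc_def) (simp add: b_def)
    have Veq: "(\<Sum>k<Suc N. \<Sum>l<Suc N. form (\<psi>' k) (gen T (outer (\<phi>' k) (\<phi>' l))) (\<psi>' l))
        = G - cnj a * (\<Sum>k<N. P k) - a * cnj (\<Sum>k<N. P k) + cnj a * a * (2 * c)"
    proof -
      have "(\<Sum>k<Suc N. \<Sum>l<Suc N. form (\<psi>' k) (gen T (outer (\<phi>' k) (\<phi>' l))) (\<psi>' l))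
         = (\<Sum>k<N. \<Sum>l<N. form (\<psi>' k) (gen T (outer (\<phi>' k) (\<phi>' l))) (\<psi>' l))
           + (\<Sum>k<N. form (\<psi>' k) (gen T (outer (\<phi>' k) (\<phi>' N))) (\<psi>' N))
           + (\<Sum>l<N. form (\<psi>' N) (gen T (outer (\<phi>' N) (\<phi>' l))) (\<psi>' l))
           + form (\<psi>' N) (gen T (outer (\<phi>' N) (\<phi>' N))) (\<psi>' N)"
        by (simp add: sum.distrib)
      also have "(\<Sum>k<N. \<Sum>l<N. form (\<psi>' k) (gen T (outer (\<phi>' k) (\<phi>' l))) (\<psi>' l)) = G"
        unfolding G_def by (intro sum.cong refl) (simp add: \<psi>'_def \<phi>'_def)
      also have "(\<Sum>k<N. form (\<psi>' k) (gen T (outer (\<phi>' k) (\<phi>' N))) (\<psi>' N)) = - cnj a * (\<Sum>k<N. P k)"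
        by (simp add: tN sum_distrib_left)
      also have "(\<Sum>l<N. form (\<psi>' N) (gen T (outer (\<phi>' N) (\<phi>' l))) (\<psi>' l)) = - a * cnj (\<Sum>k<N. P k)"
        by (simp add: Nt sum_distrib_left cnj_sum)
      finally show ?thesis by (simp add: NN)
    qed
    show "cnonneg (\<Sum>k<N. \<Sum>l<N. cinner (\<psi> k) (mat_app (Lplus T chi (outer (\<phi> k) (\<phi> l))) (\<psi> l)))"
      using V unfolding Veq target fin_alg[OF creal[folded c_def]] .
  qed
  show ?thesis using P1 P2 P3 by blast
qed

end
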